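(* Let $n \equiv 0 \pmod 4$ and let $C$ be a self-dual binary linear $(n,k,d)$-code. If $G$ is a generator matrix of $C$ in standard form, then the number of rows of $G$ whose weight is singly-even (i.e. congruent to $2 \bmod 4$) is even.
   Context: A binary linear $(n,k,d)$-code is a $k$-dimensional subspace of $\mathbb{F}_2^n$ with minimum distance $d$. For $x,y\in\mathbb{F}_2^n$ the inner product is $\sum_i x_iy_i \in \mathbb{F}_2$; the dual code is $C^{\perp}=\{c\in\mathbb{F}_2^n : c\cdot x=0 \ \forall x\in C\}$, and $C$ is self-dual if $C=C^{\perp}$ (so $k=n/2$). A generator matrix is in standard form if it equals $(I_k \mid A)$ with $I_k$ the $k\times k$ identity matrix and $A$ a $k\times k$ binary matrix. The weight $w(x)$ of a vector is its number of nonzero coordinates; $x$ is singly-even if $w(x)\equiv 2 \pmod 4$ and doubly-even if $w(x)\equiv 0\pmod 4$. *)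

theory Defs
  imports Main
begin

text \<open>Binary vectors of length n are modelled as functions nat => bool (True = 1 in F_2)
  that vanish outside the index set {0..<n}. Addition in F_2^n is pointwise xor.\<close>

definition bvecs :: "nat \<Rightarrow> (nat \<Rightarrow> bool) set" where
  "bvecs n = {x. \<forall>i. n \<le> i \<longrightarrow> \<not> x i}"

definition bzero :: "nat \<Rightarrow> bool" where
  "bzero = (\<lambda>i. False)"

definition badd :: "(nat \<Rightarrow> bool) \<Rightarrow> (nat \<Rightarrow> bool) \<Rightarrow> (nat \<Rightarrow> bool)" where
  "badd x y = (\<lambda>i. x i \<noteq> y i)"

definition bweight :: "nat \<Rightarrow> (nat \<Rightarrow> bool) \<Rightarrow> nat" where
  "bweight n x = card {i. i < n \<and> x i}"

definition binner :: "nat \<Rightarrow> (nat \<Rightarrow> bool) \<Rightarrow> (nat \<Rightarrow> bool) \<Rightarrow> bool" where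
  "binner n x y = odd (card {i. i < n \<and> x i \<and> y i})"

text \<open>A binary linear code of length n: an F_2-subspace of F_2^n
  (over F_2, a subspace is a subset containing 0 and closed under addition).\<close>
definition binary_linear_code :: "nat \<Rightarrow> (nat \<Rightarrow> bool) set \<Rightarrow> bool" where
  "binary_linear_code n C \<longleftrightarrow> C \<subseteq> bvecs n \<and> bzero \<in> C \<and> (\<forall>x\<in>C. \<forall>y\<in>C. badd x y \<in> C)"

definition dual_code :: "nat \<Rightarrow> (nat \<Rightarrow> bool) set \<Rightarrow> (nat \<Rightarrow> bool) set" where
  "dual_code n C = {c \<in> bvecs n. \<forall>x\<in>C. \<not> binner n c x}"

definition self_dual :: "nat \<Rightarrow> (nat \<Rightarrow> bool) set \<Rightarrow> bool" where
  "self_dual n C \<longleftrightarrow> binary_linear_code n C \<and> C = dual_code n C"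

definition row_comb :: "(nat \<Rightarrow> nat \<Rightarrow> bool) \<Rightarrow> nat set \<Rightarrow> (nat \<Rightarrow> bool)" where
  "row_comb G S = (\<lambda>j. odd (card {i \<in> S. G i j}))"

definition generator_matrix :: "nat \<Rightarrow> nat \<Rightarrow> (nat \<Rightarrow> bool) set \<Rightarrow> (nat \<Rightarrow> nat \<Rightarrow> bool) \<Rightarrow> bool" where
  "generator_matrix n k C G \<longleftrightarrow>
     (\<forall>i<k. G i \<in> bvecs n) \<and>
     (\<forall>S. S \<subseteq> {..<k} \<longrightarrow> row_comb G S = bzero \<longrightarrow> S = {}) \<and>
     C = {row_comb G S | S. S \<subseteq> {..<k}}"

text \<open>Standard form (I_k | A) with A a k x k matrix (so n = 2k).\<close>
definition standard_form :: "nat \<Rightarrow> nat \<Rightarrow> (nat \<Rightarrow> nat \<Rightarrow> bool) \<Rightarrow> bool" where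
  "standard_form n k G \<longleftrightarrow> n = 2 * k \<and> (\<forall>i<k. \<forall>j<k. G i j = (i = j))"

end

theory Submission
  imports Defs
begin

lemma weight_badd:
  "bweight n (badd x y) + 2 * card {i. i < n \<and> x i \<and> y i} = bweight n x + bweight n y"
proof -
  let ?A = "{i. i < n \<and> x i}" and ?B = "{i. i < n \<and> y i}"
  have fA: "finite ?A" and fB: "finite ?B" by auto
  have e1: "{i. i < n \<and> badd x y i} = (?A - ?B) \<union> (?B - ?A)" by (auto simp: badd_def)
  have e2: "{i. i < n \<and> x i \<and> y i} = ?A \<inter> ?B" by auto
  have c1: "card ((?A - ?B) \<union> (?B - ?A)) = card (?A - ?B) + card (?B - ?A)"
    by (rule card_Un_disjoint) auto
  have c2: "card (?A - ?B) + card (?A \<inter> ?B) = card ?A"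
  proof -
    have "?A = (?A - ?B) \<union> (?A \<inter> ?B)" by blast
    then have "card ?A = card ((?A - ?B) \<union> (?A \<inter> ?B))" by simp
    also have "\<dots> = card (?A - ?B) + card (?A \<inter> ?B)" by (rule card_Un_disjoint) auto
    finally show ?thesis by simp
  qed
  have c3: "card (?B - ?A) + card (?A \<inter> ?B) = card ?B"
  proof -
    have "?B = (?B - ?A) \<union> (?A \<inter> ?B)" by blast
    then have "card ?B = card ((?B - ?A) \<union> (?A \<inter> ?B))" by simp
    also have "\<dots> = card (?B - ?A) + card (?A \<inter> ?B)" by (rule card_Un_disjoint) auto
    finally show ?thesis by simp
  qed
  have "bweight n (badd x y) = card (?A - ?B) + card (?B - ?A)" unfolding bweight_def e1 c1 ..
  moreover have "card {i. i < n \<and> x i \<and> y i} = card (?A \<inter> ?B)" unfolding e2 ..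
  ultimately show ?thesis unfolding bweight_def using c2 c3 by linarith
qed

lemma sum_mod4:
  assumes "finite S" "\<forall>i\<in>S. even (f i :: nat)"
  shows "(\<Sum>i\<in>S. f i) mod 4 = (2 * card {i\<in>S. f i mod 4 = 2}) mod 4"
  using assms
proof (induction S rule: finite_induct)
  case empty then show ?case by simp
next
  case (insert a S)
  have ev: "even (f a)" using insert by auto
  have ih: "(\<Sum>i\<in>S. f i) mod 4 = (2 * card {i\<in>S. f i mod 4 = 2}) mod 4" using insert by auto
  have fs: "finite {i\<in>S. f i mod 4 = 2}" using insert by auto
  have na: "a \<notin> {i\<in>S. f i mod 4 = 2}" using insert by auto
  show ?case
  proof (cases "f a mod 4 = 2")
    case True
    have "{i\<in>insert a S. f i mod 4 = 2} = insert a {i\<in>S. f i mod 4 = 2}" using True by auto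
    then have "card {i\<in>insert a S. f i mod 4 = 2} = Suc (card {i\<in>S. f i mod 4 = 2})"
      using fs na by simp
    have "(f a + sum f S) mod 4 = (f a mod 4 + sum f S mod 4) mod 4" by (rule mod_add_eq[symmetric])
    also have "\<dots> = (2 + (2 * card {i\<in>S. f i mod 4 = 2}) mod 4) mod 4" using True ih by simp
    also have "\<dots> = (2 + 2 * card {i\<in>S. f i mod 4 = 2}) mod 4" by (rule mod_add_right_eq)
    finally show ?thesis using insert(1,2) \<open>card {i\<in>insert a S. f i mod 4 = 2} = Suc (card {i\<in>S. f i mod 4 = 2})\<close> by simp
  next
    case False
    then have f0: "f a mod 4 = 0" using ev by presburger
    have "{i\<in>insert a S. f i mod 4 = 2} = {i\<in>S. f i mod 4 = 2}" using False by auto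
    have "(f a + sum f S) mod 4 = (f a mod 4 + sum f S mod 4) mod 4" by (rule mod_add_eq[symmetric])
    also have "\<dots> = (2 * card {i\<in>S. f i mod 4 = 2}) mod 4" using f0 ih by simp
    finally show ?thesis using insert(1,2) \<open>{i\<in>insert a S. f i mod 4 = 2} = {i\<in>S. f i mod 4 = 2}\<close> by simp
  qed
qed

theorem mainTheorem1:
  fixes n k :: nat and C :: "(nat \<Rightarrow> bool) set" and G :: "nat \<Rightarrow> nat \<Rightarrow> bool"
  assumes "n mod 4 = 0"
    and "self_dual n C"
    and "generator_matrix n k C G"
    and "standard_form n k G"
  shows "even (card {i. i < k \<and> bweight n (G i) mod 4 = 2})"
proof -
  have Cdef: "C = {row_comb G S | S. S \<subseteq> {..<k}}" using assms(3) unfolding generator_matrix_def by blast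
  have Cd: "C = dual_code n C" using assms(2) unfolding self_dual_def by blast
  have orth: "\<not> binner n x y" if "x \<in> C" "y \<in> C" for x y
    using that Cd unfolding dual_code_def by blast
  have evw: "even (bweight n x)" if "x \<in> C" for x
    using orth[OF that that] unfolding binner_def bweight_def by simp
  have nk: "n = 2 * k" and idm: "\<forall>i<k. \<forall>j<k. G i j = (i = j)"
    using assms(4) unfolding standard_form_def by auto
  have rc_in: "row_comb G S \<in> C" if "S \<subseteq> {..<k}" for S using that Cdef by blast
  have row_in: "G a \<in> C" if "a < k" for a
  proof -
    have "row_comb G {a} = G a" unfolding row_comb_def
    proof
      fix j
      show "odd (card {i \<in> {a}. G i j}) = G a j"
        by (cases "G a j") (auto simp: Collect_conv_if)
    qed
    then show ?thesis using rc_in[of "{a}"] that by simp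
  qed
  define ones where "ones = (\<lambda>i::nat. i < n)"
  have ones_b: "ones \<in> bvecs n" unfolding ones_def bvecs_def by auto
  have ones_C: "ones \<in> C"
  proof -
    have "\<forall>x\<in>C. \<not> binner n ones x"
    proof
      fix x assume "x \<in> C"
      then show "\<not> binner n ones x" using evw[of x] unfolding binner_def bweight_def ones_def by simp
    qed
    then have "ones \<in> dual_code n C" using ones_b unfolding dual_code_def by blast
    then show ?thesis using Cd by simp
  qed
  then obtain S where S: "S \<subseteq> {..<k}" "ones = row_comb G S" using Cdef by blast
  have "S = {..<k}"
  proof
    show "{..<k} \<subseteq> S"
    proof
      fix j assume j: "j \<in> {..<k}"
      have "ones j" using j nk unfolding ones_def by simp
      then have "row_comb G S j" using S(2) by simp
      then have "odd (card {i \<in> S. G i j})" unfolding row_comb_def by simp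
      moreover have "{i \<in> S. G i j} = {i \<in> S. i = j}" using S(1) j idm by auto
      moreover have "{i \<in> S. i = j} = (if j \<in> S then {j} else {})" by auto
      ultimately show "j \<in> S" by (cases "j \<in> S") simp_all
    qed
  qed (use S in auto)
  then have ones_eq: "ones = row_comb G {..<k}" using S by simp
  have key: "T \<subseteq> {..<k} \<Longrightarrow> bweight n (row_comb G T) mod 4 = (\<Sum>i\<in>T. bweight n (G i)) mod 4" for T
  proof -
    assume T: "T \<subseteq> {..<k}"
    have "finite T" using T finite_subset by blast
    then show ?thesis using T
    proof (induction T rule: finite_induct)
      case empty
      have "row_comb G {} = bzero" unfolding row_comb_def bzero_def by simp
      then show ?case unfolding bweight_def bzero_def by simp
    next
      case (insert a T)
      have rc: "row_comb G (insert a T) = badd (G a) (row_comb G T)"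
      proof
        fix j
        have "{i \<in> insert a T. G i j} = (if G a j then insert a {i \<in> T. G i j} else {i \<in> T. G i j})"
          by auto
        moreover have "finite {i \<in> T. G i j}" using insert by auto
        moreover have "a \<notin> {i \<in> T. G i j}" using insert by auto
        ultimately show "row_comb G (insert a T) j = badd (G a) (row_comb G T) j"
          unfolding row_comb_def badd_def by auto
      qed
      have aC: "G a \<in> C" using insert row_in by auto
      have TC: "row_comb G T \<in> C" using insert rc_in by auto
      have "even (card {i. i < n \<and> G a i \<and> row_comb G T i})"
        using orth[OF aC TC] unfolding binner_def by simp
      then obtain m where m: "card {i. i < n \<and> G a i \<and> row_comb G T i} = 2 * m" by blast
      have w: "bweight n (badd (G a) (row_comb G T)) + 4 * m = bweight n (G a) + bweight n (row_comb G T)"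
        using weight_badd[of n "G a" "row_comb G T"] m by simp
      have ih: "bweight n (row_comb G T) mod 4 = (\<Sum>i\<in>T. bweight n (G i)) mod 4" using insert by auto
      have "bweight n (row_comb G (insert a T)) mod 4 = (bweight n (G a) + bweight n (row_comb G T)) mod 4"
        using w rc by (metis mod_mult_self2)
      also have "\<dots> = (bweight n (G a) + (\<Sum>i\<in>T. bweight n (G i))) mod 4"
        using ih by (metis mod_add_right_eq)
      also have "\<dots> = (\<Sum>i\<in>insert a T. bweight n (G i)) mod 4" using insert by simp
      finally show ?case .
    qed
  qed
  have "bweight n ones = n" unfolding bweight_def ones_def by simp
  then have "(\<Sum>i\<in>{..<k}. bweight n (G i)) mod 4 = 0" using key[of "{..<k}"] ones_eq assms(1) by simp
  moreover have "(\<Sum>i\<in>{..<k}. bweight n (G i)) mod 4 = (2 * card {i\<in>{..<k}. bweight n (G i) mod 4 = 2}) mod 4"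
    by (rule sum_mod4) (use evw row_in in auto)
  moreover have "{i\<in>{..<k}. bweight n (G i) mod 4 = 2} = {i. i < k \<and> bweight n (G i) mod 4 = 2}" by auto
  ultimately have "(2 * card {i. i < k \<and> bweight n (G i) mod 4 = 2}) mod 4 = 0" by simp
  then show ?thesis by presburger
qed

end
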